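(* Let $f:\mathbb{R}^d\to\mathbb{R}$ be $L$-smooth ($L>0$) and assume $f$ has a minimizer $\mathbf{x}^\star$. Let $\sigma>0$ and $\epsilon\ge\frac{4\sigma^2Ld}{3}$. Then for every $\mathbf{x}$ with $f(\mathbf{x})-f(\mathbf{x}^\star)\le\frac{\sigma^2Ld}{4}$ and every $\mathbf{y}$ with $f(\mathbf{y})-f(\mathbf{x}^\star)>\epsilon$, one has $f_\sigma(\mathbf{x})<f_\sigma(\mathbf{y})$.
   Context: $f_\sigma(\mathbf{x})=\pi^{-d/2}\int_{\mathbb{R}^d} f(\mathbf{x}+\sigma\mathbf{u})\,e^{-\|\mathbf{u}\|_2^2}\,d\mathbf{u}$. $L$-smooth means differentiable with $L$-Lipschitz gradient. *)

theory Defs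
  imports "HOL-Analysis.Analysis"
begin

definition L_smooth :: "('a::euclidean_space \<Rightarrow> real) \<Rightarrow> real \<Rightarrow> bool" where
  "L_smooth f L \<longleftrightarrow>
     (\<exists>g. (\<forall>x. (f has_derivative (\<lambda>h. g x \<bullet> h)) (at x)) \<and>
          (\<forall>x y. norm (g x - g y) \<le> L * norm (x - y)))"

definition gauss_smooth :: "('a::euclidean_space \<Rightarrow> real) \<Rightarrow> real \<Rightarrow> 'a \<Rightarrow> real" where
  "gauss_smooth f \<sigma> x =
     pi powr (- real DIM('a) / 2) *
     (\<integral>u. f (x + \<sigma> *\<^sub>R u) * exp (- (norm u)\<^sup>2) \<partial>lborel)"

end

theory Submission imports Defs "HOL-Probability.Probability" begin


lemma taylor_bound:
  fixes f :: "'a::euclidean_space \<Rightarrow> real"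
  assumes der: "\<And>x. (f has_derivative (\<lambda>h. g x \<bullet> h)) (at x)"
    and lip: "\<And>x y. norm (g x - g y) \<le> L * norm (x - y)"
  shows "\<bar>f (z + h) - f z - g z \<bullet> h\<bar> \<le> L * (norm h)\<^sup>2"
proof (cases "h = 0")
  case True then show ?thesis by simp
next
  case False
  define \<phi> where "\<phi> t = f (z + t *\<^sub>R h)" for t
  have d: "(\<phi> has_derivative (\<lambda>d. g (z + t *\<^sub>R h) \<bullet> (d *\<^sub>R h))) (at t within S)" for t S
  proof -
    have 1: "((\<lambda>t. z + t *\<^sub>R h) has_derivative (\<lambda>d. d *\<^sub>R h)) (at t within S)"
      by (auto intro!: derivative_eq_intros)
    show ?thesis unfolding \<phi>_def
      by (rule has_derivative_compose[OF 1 der])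
  qed
  obtain t where t: "t \<in> {0<..<1}" and eq: "\<phi> 1 - \<phi> 0 = g (z + t *\<^sub>R h) \<bullet> ((1 - 0) *\<^sub>R h)"
    using mvt_simple[of 0 1 \<phi> "\<lambda>t d. g (z + t *\<^sub>R h) \<bullet> (d *\<^sub>R h)"] d by auto
  have "\<bar>f (z + h) - f z - g z \<bullet> h\<bar> = \<bar>(g (z + t *\<^sub>R h) - g z) \<bullet> h\<bar>"
    using eq by (simp add: \<phi>_def inner_diff_left)
  also have "\<dots> \<le> norm (g (z + t *\<^sub>R h) - g z) * norm h"
    by (rule Cauchy_Schwarz_ineq2)
  also have "\<dots> \<le> (L * norm (t *\<^sub>R h)) * norm h"
    using lip[of "z + t *\<^sub>R h" z] by (intro mult_right_mono) auto
  also have "\<dots> \<le> L * (norm h)\<^sup>2"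
  proof -
    have "0 \<le> L * norm h" using lip[of "z+h" z] norm_ge_zero[of "g (z+h) - g z"] by (simp del: norm_ge_zero)
    then have L0: "L \<ge> 0" using False by (simp add: zero_le_mult_iff)
    have "norm (t *\<^sub>R h) \<le> norm h" using t mult_right_mono[of t 1 "norm h"] by auto
    then have "norm (t *\<^sub>R h) * norm h \<le> norm h * norm h" by (simp add: mult_right_mono)
    then show ?thesis using L0 by (simp add: power2_eq_square mult.assoc mult_left_mono del: norm_scaleR)
  qed
  finally show ?thesis .
qed


lemma G1d:
  "has_bochner_integral lborel (\<lambda>x::real. exp (-x\<^sup>2) * x ^ (2*k)) (sqrt pi * (fact (2 * k) / ((4::real)^k * fact k)))"
proof -
  have h: "has_bochner_integral lborel (\<lambda>x. normal_density 0 (1/sqrt 2) x * (x - 0) ^ (2 * k))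
     (fact (2 * k) / ((2 / (1/sqrt 2)\<^sup>2)^k * fact k))"
    by (rule normal_moment_even) simp
  have e: "normal_density 0 (1/sqrt 2) x = exp (-x\<^sup>2) / sqrt pi" for x
    by (simp add: normal_density_def power_divide real_sqrt_mult)
  have "has_bochner_integral lborel (\<lambda>x. (exp (-x\<^sup>2) / sqrt pi * x ^ (2 * k)) * sqrt pi)
     ((fact (2 * k) / ((2 / (1/sqrt 2)\<^sup>2)^k * fact k)) * sqrt pi)"
    using has_bochner_integral_mult_left[OF h, of "sqrt pi"] by (simp add: e)
  moreover have "(2 / (1/sqrt 2)\<^sup>2) = (4::real)" by (simp add: power_divide)
  ultimately show ?thesis by (simp add: field_simps)
qed

lemma G0: "has_bochner_integral lborel (\<lambda>x::real. exp (-x\<^sup>2)) (sqrt pi)"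
  using G1d[of 0] by simp

lemma G2: "has_bochner_integral lborel (\<lambda>x::real. x\<^sup>2 * exp (-x\<^sup>2)) (sqrt pi / 2)"
  using G1d[of 1] by (simp add: mult.commute)

lemma nn_of_hb:
  assumes "has_bochner_integral lborel f (I::real)" "\<And>x. 0 \<le> f x"
  shows "(\<integral>\<^sup>+x. ennreal (f x) \<partial>lborel) = ennreal I"
  using assms nn_integral_eq_integral[of lborel f]
  by (simp add: has_bochner_integral_iff)

lemma norm_sq_basis: "(norm (u::'a::euclidean_space))\<^sup>2 = (\<Sum>b\<in>Basis. (u \<bullet> b)\<^sup>2)"
  by (simp only: power2_norm_eq_inner) (subst euclidean_inner, simp add: power2_eq_square)

lemma W0: "has_bochner_integral lborel (\<lambda>u::'a::euclidean_space. exp (-(norm u)\<^sup>2)) (sqrt pi ^ DIM('a))"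
proof (rule has_bochner_integral_nn_integral)
  have "(\<integral>\<^sup>+u. ennreal (exp (-(norm u)\<^sup>2)) \<partial>(lborel::'a measure))
      = (\<integral>\<^sup>+u. (\<Prod>b\<in>Basis. ennreal (exp (-(u \<bullet> b)\<^sup>2))) \<partial>(lborel::'a measure))"
  proof -
    have "ennreal (exp (-(norm u)\<^sup>2)) = (\<Prod>b\<in>Basis. ennreal (exp (-(u \<bullet> b)\<^sup>2)))" for u :: 'a
    proof -
    have "exp (-(norm u)\<^sup>2) = (\<Prod>b\<in>Basis. exp (-(u \<bullet> b)\<^sup>2))"
      by (simp only: norm_sq_basis sum_negf[symmetric] exp_sum[OF finite_Basis])
    then show "ennreal (exp (-(norm u)\<^sup>2)) = (\<Prod>b\<in>Basis. ennreal (exp (-(u \<bullet> b)\<^sup>2)))"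
      by (simp add: prod_ennreal)
    qed
    then show ?thesis by simp
  qed
  also have "\<dots> = (\<Prod>b\<in>(Basis::'a set). (\<integral>\<^sup>+x. ennreal (exp (-x\<^sup>2)) \<partial>lborel))"
    by (rule nn_integral_lborel_prod) auto
  also have "\<dots> = ennreal (sqrt pi ^ DIM('a))"
    by (simp add: nn_of_hb[OF G0] ennreal_power)
  finally show "(\<integral>\<^sup>+u. ennreal (exp (-(norm u)\<^sup>2)) \<partial>(lborel::'a measure)) = ennreal (sqrt pi ^ DIM('a))" .
qed auto

lemma W2: "has_bochner_integral lborel (\<lambda>u::'a::euclidean_space. (norm u)\<^sup>2 * exp (-(norm u)\<^sup>2))
   (real DIM('a) / 2 * sqrt pi ^ DIM('a))"
proof -
  have eq: "(\<lambda>u::'a. (norm u)\<^sup>2 * exp (-(norm u)\<^sup>2)) =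
     (\<lambda>u. \<Sum>b\<in>Basis. \<Prod>c\<in>Basis. (if c = b then (u \<bullet> c)\<^sup>2 * exp (-(u \<bullet> c)\<^sup>2) else exp (-(u \<bullet> c)\<^sup>2)))"
  proof
    fix u :: 'a
    have "(norm u)\<^sup>2 * exp (-(norm u)\<^sup>2) = (\<Sum>b\<in>Basis. (u \<bullet> b)\<^sup>2 * (\<Prod>c\<in>Basis. exp (-(u \<bullet> c)\<^sup>2)))"
      unfolding norm_sq_basis sum_negf[symmetric] exp_sum[OF finite_Basis] by (simp add: sum_distrib_right)
    also have "\<dots> = (\<Sum>b\<in>Basis. \<Prod>c\<in>Basis. (if c = b then (u \<bullet> c)\<^sup>2 * exp (-(u \<bullet> c)\<^sup>2) else exp (-(u \<bullet> c)\<^sup>2)))"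
    proof (rule sum.cong[OF refl])
      fix b :: 'a assume b: "b \<in> Basis"
      have "(\<Prod>c\<in>Basis. (if c = b then (u \<bullet> c)\<^sup>2 * exp (-(u \<bullet> c)\<^sup>2) else exp (-(u \<bullet> c)\<^sup>2)))
          = (\<Prod>c\<in>Basis. (if c = b then (u \<bullet> c)\<^sup>2 else 1) * exp (-(u \<bullet> c)\<^sup>2))"
        by (rule prod.cong) auto
      also have "\<dots> = (\<Prod>c\<in>Basis. (if c = b then (u \<bullet> c)\<^sup>2 else 1)) * (\<Prod>c\<in>Basis. exp (-(u \<bullet> c)\<^sup>2))"
        by (rule prod.distrib)
      also have "(\<Prod>c\<in>Basis. (if c = b then (u \<bullet> c)\<^sup>2 else 1)) = (u \<bullet> b)\<^sup>2"
        using b by (simp add: prod.delta)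
      finally show "(u \<bullet> b)\<^sup>2 * (\<Prod>c\<in>Basis. exp (-(u \<bullet> c)\<^sup>2)) = (\<Prod>c\<in>Basis. (if c = b then (u \<bullet> c)\<^sup>2 * exp (-(u \<bullet> c)\<^sup>2) else exp (-(u \<bullet> c)\<^sup>2)))" by simp
    qed
    finally show "(norm u)\<^sup>2 * exp (-(norm u)\<^sup>2) = \<dots>" .
  qed
  have each: "has_bochner_integral lborel
     (\<lambda>u::'a. \<Prod>c\<in>Basis. (if c = b then (u \<bullet> c)\<^sup>2 * exp (-(u \<bullet> c)\<^sup>2) else exp (-(u \<bullet> c)\<^sup>2)))
     (sqrt pi ^ DIM('a) / 2)" if b: "b \<in> Basis" for b
  proof (rule has_bochner_integral_nn_integral)
    have "(\<integral>\<^sup>+u. ennreal (\<Prod>c\<in>Basis. (if c = b then (u \<bullet> c)\<^sup>2 * exp (-(u \<bullet> c)\<^sup>2) else exp (-(u \<bullet> c)\<^sup>2))) \<partial>(lborel::'a measure))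
      = (\<integral>\<^sup>+u. (\<Prod>c\<in>Basis. (\<lambda>c x. ennreal (if c = b then x\<^sup>2 * exp (-x\<^sup>2) else exp (-x\<^sup>2))) c (u \<bullet> c)) \<partial>lborel)"
      by (intro nn_integral_cong) (simp add: prod_ennreal[symmetric] if_distrib[of ennreal])
    also have "\<dots> = (\<Prod>c\<in>(Basis::'a set). (\<integral>\<^sup>+x. ennreal (if c = b then x\<^sup>2 * exp (-x\<^sup>2) else exp (-x\<^sup>2)) \<partial>lborel))"
      by (rule nn_integral_lborel_prod) auto
    also have "\<dots> = (\<Prod>c\<in>(Basis::'a set). ennreal (if c = b then sqrt pi / 2 else sqrt pi))"
      by (intro prod.cong refl) (auto simp: nn_of_hb[OF G0] nn_of_hb[OF G2])
    also have "\<dots> = ennreal (\<Prod>c\<in>(Basis::'a set). (if c = b then sqrt pi / 2 else sqrt pi))"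
      by (simp add: prod_ennreal)
    also have "(\<Prod>c\<in>(Basis::'a set). (if c = b then sqrt pi / 2 else sqrt pi)) = sqrt pi ^ DIM('a) / 2"
    proof -
      have "DIM('a) = Suc (DIM('a) - 1)" by simp
      then show ?thesis using b by (subst prod_gen_delta) (auto simp: power_Suc[symmetric] simp del: power_Suc)
    qed
    finally show "(\<integral>\<^sup>+u. ennreal (\<Prod>c\<in>Basis. (if c = b then (u \<bullet> c)\<^sup>2 * exp (-(u \<bullet> c)\<^sup>2) else exp (-(u \<bullet> c)\<^sup>2))) \<partial>(lborel::'a measure)) = ennreal (sqrt pi ^ DIM('a) / 2)" .
    show "AE x in lborel. 0 \<le> (\<Prod>c\<in>Basis. (if c = b then (x \<bullet> c)\<^sup>2 * exp (-(x \<bullet> c)\<^sup>2) else exp (-(x \<bullet> c)\<^sup>2)))"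
      by (auto intro!: prod_nonneg)
  qed auto
  have "has_bochner_integral lborel
     (\<lambda>u::'a. \<Sum>b\<in>Basis. \<Prod>c\<in>Basis. (if c = b then (u \<bullet> c)\<^sup>2 * exp (-(u \<bullet> c)\<^sup>2) else exp (-(u \<bullet> c)\<^sup>2)))
     (\<Sum>b\<in>(Basis::'a set). sqrt pi ^ DIM('a) / 2)"
    by (rule has_bochner_integral_sum) (use each in auto)
  then show ?thesis unfolding eq by simp
qed


lemma Wlin: "has_bochner_integral lborel (\<lambda>u::'a::euclidean_space. (c + k * (norm u)\<^sup>2) * exp (-(norm u)\<^sup>2))
   (c * sqrt pi ^ DIM('a) + k * (real DIM('a) / 2 * sqrt pi ^ DIM('a)))"
proof -
  have "has_bochner_integral lborel (\<lambda>u::'a. c * exp (-(norm u)\<^sup>2) + k * ((norm u)\<^sup>2 * exp (-(norm u)\<^sup>2)))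
   (c * sqrt pi ^ DIM('a) + k * (real DIM('a) / 2 * sqrt pi ^ DIM('a)))"
    by (intro has_bochner_integral_add has_bochner_integral_mult_right W0 W2)
  then show ?thesis by (simp add: algebra_simps)
qed

lemma distr_uminus_euclidean: "distr lborel borel uminus = (lborel :: 'a::euclidean_space measure)"
  using lborel_affine[of "-1::real" "0::'a"] by (simp add: density_1)

lemma integral_reflect:
  fixes F :: "'a::euclidean_space \<Rightarrow> real"
  assumes [measurable]: "F \<in> borel_measurable borel"
  shows "integral\<^sup>L lborel (\<lambda>u. F (-u)) = integral\<^sup>L lborel F"
  using integral_distr[of uminus lborel borel F] by (simp add: distr_uminus_euclidean)

lemma integrable_reflect:
  fixes F :: "'a::euclidean_space \<Rightarrow> real"
  assumes [measurable]: "F \<in> borel_measurable borel" and "integrable lborel F"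
  shows "integrable lborel (\<lambda>u. F (-u))"
  using integrable_distr_eq[of uminus lborel borel F] assms by (simp add: distr_uminus_euclidean)


lemma integrable_shift:
  fixes f :: "'a::euclidean_space \<Rightarrow> real"
  assumes der: "\<And>x. (f has_derivative (\<lambda>h. g x \<bullet> h)) (at x)"
    and lip: "\<And>x y. norm (g x - g y) \<le> L * norm (x - y)"
  shows "integrable lborel (\<lambda>u. f (z + \<sigma> *\<^sub>R u) * exp (-(norm u)\<^sup>2))"
proof -
  have "continuous_on UNIV f"
    using der by (meson continuous_at_imp_continuous_on has_derivative_continuous)
  then have [measurable]: "f \<in> borel_measurable borel"
    by (rule borel_measurable_continuous_onI)
  define A where "A = \<bar>f z\<bar> + norm (g z) * \<bar>\<sigma>\<bar>"
  define B where "B = norm (g z) * \<bar>\<sigma>\<bar> + \<bar>L\<bar> * \<sigma>\<^sup>2"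
  show ?thesis
  proof (rule Bochner_Integration.integrable_bound)
    show "integrable lborel (\<lambda>u::'a. (A + B * (norm u)\<^sup>2) * exp (-(norm u)\<^sup>2))"
      using Wlin[of A B] by (rule integrable.intros)
    show "(\<lambda>u. f (z + \<sigma> *\<^sub>R u) * exp (-(norm u)\<^sup>2)) \<in> borel_measurable lborel"
      by measurable
    show "AE u in lborel. norm (f (z + \<sigma> *\<^sub>R u) * exp (-(norm u)\<^sup>2))
        \<le> norm ((A + B * (norm u)\<^sup>2) * exp (-(norm u)\<^sup>2))"
    proof (rule AE_I2)
      fix u :: 'a
      have t: "\<bar>f (z + \<sigma> *\<^sub>R u) - f z - g z \<bullet> (\<sigma> *\<^sub>R u)\<bar> \<le> L * (norm (\<sigma> *\<^sub>R u))\<^sup>2"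
        by (rule taylor_bound[OF der lip])
      have c: "\<bar>g z \<bullet> (\<sigma> *\<^sub>R u)\<bar> \<le> norm (g z) * (\<bar>\<sigma>\<bar> * norm u)"
        using Cauchy_Schwarz_ineq2[of "g z" "\<sigma> *\<^sub>R u"] by simp
      have nu: "norm u \<le> 1 + (norm u)\<^sup>2"
      proof -
        have "0 \<le> (norm u - 1)\<^sup>2" by simp
        moreover have "0 \<le> (norm u)\<^sup>2" by simp
        moreover have "0 \<le> norm u" by simp
        ultimately have "norm u * 2 \<le> 1 + (norm u)\<^sup>2" unfolding power2_diff by (simp add: algebra_simps)
        with norm_ge_zero[of u] show ?thesis by linarith
      qed
      have "norm (g z) * (\<bar>\<sigma>\<bar> * norm u) \<le> norm (g z) * (\<bar>\<sigma>\<bar> * (1 + (norm u)\<^sup>2))"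
        by (intro mult_left_mono nu) auto
      moreover have "L * (norm (\<sigma> *\<^sub>R u))\<^sup>2 \<le> \<bar>L\<bar> * \<sigma>\<^sup>2 * (norm u)\<^sup>2"
        using mult_right_mono[of L "\<bar>L\<bar>" "\<sigma>\<^sup>2 * (norm u)\<^sup>2"]
        by (simp add: power_mult_distrib mult.assoc)
      ultimately have "\<bar>f (z + \<sigma> *\<^sub>R u)\<bar> \<le> A + B * (norm u)\<^sup>2"
        using t c unfolding A_def B_def by (simp add: algebra_simps) linarith
      then have "\<bar>f (z + \<sigma> *\<^sub>R u)\<bar> * exp (-(norm u)\<^sup>2) \<le> (A + B * (norm u)\<^sup>2) * exp (-(norm u)\<^sup>2)"
        by (intro mult_right_mono) auto
      then show "norm (f (z + \<sigma> *\<^sub>R u) * exp (-(norm u)\<^sup>2))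
        \<le> norm ((A + B * (norm u)\<^sup>2) * exp (-(norm u)\<^sup>2))"
        by (simp add: abs_mult)
    qed
  qed
qed


theorem lemma3p6:
  fixes f :: "'a::euclidean_space \<Rightarrow> real"
    and L \<sigma> \<epsilon> :: real and xstar x y :: 'a
  assumes "L > 0" and "L_smooth f L"
    and "\<forall>z. f xstar \<le> f z"
    and "\<sigma> > 0"
    and "\<epsilon> \<ge> 4 * \<sigma>\<^sup>2 * L * real DIM('a) / 3"
    and "f x - f xstar \<le> \<sigma>\<^sup>2 * L * real DIM('a) / 4"
    and "f y - f xstar > \<epsilon>"
  shows "gauss_smooth f \<sigma> x < gauss_smooth f \<sigma> y"
proof -
  obtain g where der: "\<And>x. (f has_derivative (\<lambda>h. g x \<bullet> h)) (at x)"
    and lip: "\<And>x y. norm (g x - g y) \<le> L * norm (x - y)"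
    using assms(2) unfolding L_smooth_def by blast
  have "continuous_on UNIV f"
    using der by (meson continuous_at_imp_continuous_on has_derivative_continuous)
  then have [measurable]: "f \<in> borel_measurable borel"
    by (rule borel_measurable_continuous_onI)
  define P where "P = sqrt pi ^ DIM('a)"
  define d where "d = real DIM('a)"
  define I where "I z = (\<integral>u. f (z + \<sigma> *\<^sub>R u) * exp (-(norm u)\<^sup>2) \<partial>lborel)" for z
  have P0: "P > 0" unfolding P_def by simp
  have d0: "d > 0" unfolding d_def by simp
  have sym: "2 * I z = (\<integral>u. (f (z + \<sigma> *\<^sub>R u) + f (z + \<sigma> *\<^sub>R (-u))) * exp (-(norm u)\<^sup>2) \<partial>lborel)"
    and isym: "integrable lborel (\<lambda>u. (f (z + \<sigma> *\<^sub>R u) + f (z + \<sigma> *\<^sub>R (-u))) * exp (-(norm u)\<^sup>2))"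
    for z
  proof -
    define F where "F u = f (z + \<sigma> *\<^sub>R u) * exp (-(norm u)\<^sup>2)" for u
    have [measurable]: "F \<in> borel_measurable borel" unfolding F_def by measurable
    have i1: "integrable lborel F" unfolding F_def by (rule integrable_shift[OF der lip])
    have i2: "integrable lborel (\<lambda>u. F (-u))" by (rule integrable_reflect) (use i1 in auto)
    have e2: "integral\<^sup>L lborel (\<lambda>u. F (-u)) = I z"
      using integral_reflect[of F] unfolding I_def F_def by simp
    have eqf: "(\<lambda>u. (f (z + \<sigma> *\<^sub>R u) + f (z + \<sigma> *\<^sub>R (-u))) * exp (-(norm u)\<^sup>2)) = (\<lambda>u. F u + F (-u))"
      unfolding F_def by (auto simp: algebra_simps)
    show "integrable lborel (\<lambda>u. (f (z + \<sigma> *\<^sub>R u) + f (z + \<sigma> *\<^sub>R (-u))) * exp (-(norm u)\<^sup>2))"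
      unfolding eqf using i1 i2 by simp
    show "2 * I z = (\<integral>u. (f (z + \<sigma> *\<^sub>R u) + f (z + \<sigma> *\<^sub>R (-u))) * exp (-(norm u)\<^sup>2) \<partial>lborel)"
    proof -
      have "integral\<^sup>L lborel (\<lambda>u. F u + F (-u)) = integral\<^sup>L lborel F + integral\<^sup>L lborel (\<lambda>u. F (-u))"
        by (rule Bochner_Integration.integral_add[OF i1 i2])
      then show ?thesis unfolding eqf e2 by (simp add: I_def F_def[abs_def])
    qed
  qed
  have tb: "\<bar>f (z + \<sigma> *\<^sub>R u) + f (z + \<sigma> *\<^sub>R (-u)) - 2 * f z\<bar> \<le> 2 * L * \<sigma>\<^sup>2 * (norm u)\<^sup>2" for z u
  proof -
    have a: "\<bar>f (z + \<sigma> *\<^sub>R u) - f z - g z \<bullet> (\<sigma> *\<^sub>R u)\<bar> \<le> L * (norm (\<sigma> *\<^sub>R u))\<^sup>2"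
      by (rule taylor_bound[OF der lip])
    have b: "\<bar>f (z + \<sigma> *\<^sub>R (-u)) - f z - g z \<bullet> (\<sigma> *\<^sub>R (-u))\<bar> \<le> L * (norm (\<sigma> *\<^sub>R (-u)))\<^sup>2"
      by (rule taylor_bound[OF der lip])
    have n: "(norm (\<sigma> *\<^sub>R u))\<^sup>2 = \<sigma>\<^sup>2 * (norm u)\<^sup>2" "(norm (\<sigma> *\<^sub>R (-u)))\<^sup>2 = \<sigma>\<^sup>2 * (norm u)\<^sup>2"
      by (simp_all add: power_mult_distrib)
    have "g z \<bullet> (\<sigma> *\<^sub>R (-u)) = - (g z \<bullet> (\<sigma> *\<^sub>R u))" by simp
    then show ?thesis using a b unfolding n by (simp add: abs_le_iff)
  qed
  have hx: "2 * I x \<le> 2 * f x * P + 2 * L * \<sigma>\<^sup>2 * (d / 2 * P)"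
  proof -
    have "2 * I x \<le> (\<integral>u. (2 * f x + 2 * L * \<sigma>\<^sup>2 * (norm u)\<^sup>2) * exp (-(norm u)\<^sup>2) \<partial>(lborel::'a measure))"
      unfolding sym
    proof (rule Bochner_Integration.integral_mono)
      show "integrable lborel (\<lambda>u. (f (x + \<sigma> *\<^sub>R u) + f (x + \<sigma> *\<^sub>R (-u))) * exp (-(norm u)\<^sup>2))" by (rule isym)
      show "integrable lborel (\<lambda>u. (2 * f x + 2 * L * \<sigma>\<^sup>2 * (norm u)\<^sup>2) * exp (-(norm u)\<^sup>2))"
        using Wlin by (rule integrable.intros)
      fix u :: 'a
      show "(f (x + \<sigma> *\<^sub>R u) + f (x + \<sigma> *\<^sub>R (-u))) * exp (-(norm u)\<^sup>2)
          \<le> (2 * f x + 2 * L * \<sigma>\<^sup>2 * (norm u)\<^sup>2) * exp (-(norm u)\<^sup>2)"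
        using tb[of x u] by (intro mult_right_mono) (auto simp: abs_le_iff)
    qed
    also have "\<dots> = 2 * f x * P + 2 * L * \<sigma>\<^sup>2 * (d / 2 * P)"
      unfolding P_def d_def by (rule has_bochner_integral_integral_eq[OF Wlin])
    finally show ?thesis .
  qed
  have hy: "2 * f y * P + (- 2 * L * \<sigma>\<^sup>2) * (d / 2 * P) \<le> 2 * I y"
  proof -
    have "2 * f y * P + (- 2 * L * \<sigma>\<^sup>2) * (d / 2 * P) = (\<integral>u. (2 * f y + (- 2 * L * \<sigma>\<^sup>2) * (norm u)\<^sup>2) * exp (-(norm u)\<^sup>2) \<partial>(lborel::'a measure))"
      unfolding P_def d_def by (rule has_bochner_integral_integral_eq[OF Wlin, symmetric])
    also have "\<dots> \<le> 2 * I y"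
      unfolding sym
    proof (rule Bochner_Integration.integral_mono)
      show "integrable lborel (\<lambda>u. (f (y + \<sigma> *\<^sub>R u) + f (y + \<sigma> *\<^sub>R (-u))) * exp (-(norm u)\<^sup>2))" by (rule isym)
      show "integrable lborel (\<lambda>u. (2 * f y + (- 2 * L * \<sigma>\<^sup>2) * (norm u)\<^sup>2) * exp (-(norm u)\<^sup>2))"
        using Wlin by (rule integrable.intros)
      fix u :: 'a
      show "(2 * f y + (- 2 * L * \<sigma>\<^sup>2) * (norm u)\<^sup>2) * exp (-(norm u)\<^sup>2)
          \<le> (f (y + \<sigma> *\<^sub>R u) + f (y + \<sigma> *\<^sub>R (-u))) * exp (-(norm u)\<^sup>2)"
        using tb[of y u] by (intro mult_right_mono) (auto simp: abs_le_iff)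
    qed
    finally show ?thesis .
  qed
  have q: "f y - f x > L * \<sigma>\<^sup>2 * d"
  proof -
    have "0 < \<sigma>\<^sup>2 * L * d" using assms(1,4) d0 by simp
    then show ?thesis using assms(5,6,7) unfolding d_def by (simp add: algebra_simps)
  qed
  have "0 < (f y - f x - L * \<sigma>\<^sup>2 * d) * P" using q P0 by simp
  then have "I x < I y" using hx hy by (simp add: algebra_simps)
  moreover have "0 < pi powr (- real DIM('a) / 2)" by simp
  ultimately show ?thesis unfolding gauss_smooth_def I_def[symmetric] by simp
qed

end
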